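(* Let $X \subset \mathbb{R}^{2n}$ be a symplectically self-polar convex body with $C^1$-smooth boundary and let $Y=\{x+f(x): x\in\partial X\}$. Then for every $v\in\mathbb{R}^{2n}\setminus\{0\}$ the ray $\{tv: t\ge 0\}$ intersects $Y$ in exactly one point; thus $Y$ is the boundary of a star-shaped (not necessarily convex) body. If moreover $\partial X$ is $C^2$-smooth, then every such ray is transversal to $Y$, i.e. for every $x\in\partial X$ the vector $x+f(x)$ does not lie in the tangent space $T_{x+f(x)}Y=\{\xi+\nabla_\xi f:\ \xi\in T_x\partial X\}$.
   Context: $\mathbb{R}^{2n}\cong\mathbb{C}^n$, $J$ is multiplication by $\sqrt{-1}$, $\omega(u,v)=\langle Ju,v\rangle$. For a convex body $X$ with origin in its interior, $X^\omega=\{y: \omega(x,y)\le 1\ \forall x\in X\}$; $X$ is symplectically self-polar if $X=X^\omega$. For $C^1$ boundary, $f\colon\partial X\to\partial X^\omega$ assigns to $x$ the unique $f(x)\in X^\omega$ with $\omega(x,f(x))=1$; when $X=X^\omega$, $f$ maps $\partial X$ to itself, and for $C^2$ boundary $f$ is $C^1$ and $Y$ is a $C^1$ embedded hypersurface. *)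

theory Defs
  imports "HOL-Analysis.Analysis"
begin

text \<open>R^{2n} is identified with C^n, modelled as complex ^ 'n with its real inner product.\<close>

definition cJ :: "complex ^ 'n \<Rightarrow> complex ^ 'n" where
  "cJ x = (\<chi> i. \<i> * x $ i)"

definition omega :: "complex ^ 'n \<Rightarrow> complex ^ 'n \<Rightarrow> real" where
  "omega u v = inner (cJ u) v"

definition symp_polar :: "(complex ^ 'n) set \<Rightarrow> (complex ^ 'n) set" where
  "symp_polar X = {y. \<forall>x\<in>X. omega x y \<le> 1}"

definition convex_body_0 :: "(complex ^ 'n) set \<Rightarrow> bool" where
  "convex_body_0 X \<longleftrightarrow> compact X \<and> convex X \<and> 0 \<in> interior X"

definition symp_self_polar :: "(complex ^ 'n) set \<Rightarrow> bool" where
  "symp_self_polar X \<longleftrightarrow> X = symp_polar X"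

definition C1_boundary :: "('a::euclidean_space) set \<Rightarrow> bool" where
  "C1_boundary X \<longleftrightarrow> (\<forall>x\<in>frontier X. \<exists>U g G. open U \<and> x \<in> U \<and>
      (\<forall>y\<in>U. (g has_derivative (\<lambda>h. G y \<bullet> h)) (at y)) \<and> continuous_on U G \<and>
      G x \<noteq> 0 \<and> (\<forall>y\<in>U. y \<in> X \<longleftrightarrow> g y \<le> (0::real)))"

definition C2_boundary :: "('a::euclidean_space) set \<Rightarrow> bool" where
  "C2_boundary X \<longleftrightarrow> (\<forall>x\<in>frontier X. \<exists>U g G. open U \<and> x \<in> U \<and>
      (\<forall>y\<in>U. (g has_derivative (\<lambda>h. G y \<bullet> h)) (at y)) \<and> continuous_on U G \<and>
      (\<forall>b\<in>Basis. \<exists>H. (\<forall>y\<in>U. ((\<lambda>z. G z \<bullet> b) has_derivative (\<lambda>h. H y \<bullet> h)) (at y))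
                        \<and> continuous_on U H) \<and>
      G x \<noteq> 0 \<and> (\<forall>y\<in>U. y \<in> X \<longleftrightarrow> g y \<le> (0::real)))"

definition sp_f :: "(complex ^ 'n) set \<Rightarrow> complex ^ 'n \<Rightarrow> complex ^ 'n" where
  "sp_f X x = (THE y. y \<in> symp_polar X \<and> omega x y = 1)"

definition Yset :: "(complex ^ 'n) set \<Rightarrow> (complex ^ 'n) set" where
  "Yset X = {x + sp_f X x | x. x \<in> frontier X}"

text \<open>T_{x+f(x)} Y = { xi + nabla_xi f : xi in T_x dX }, where tangent vectors xi are velocities
  of curves gamma in dX through x and nabla_xi f = (f o gamma)'(0).\<close>
definition tangent_Y :: "(complex ^ 'n) set \<Rightarrow> complex ^ 'n \<Rightarrow> (complex ^ 'n) set" where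
  "tangent_Y X x = {\<xi> + \<eta> | \<xi> \<eta>. \<exists>\<gamma>. (\<forall>t. \<gamma> t \<in> frontier X) \<and> \<gamma> 0 = x \<and>
      (\<gamma> has_vector_derivative \<xi>) (at 0) \<and>
      ((sp_f X \<circ> \<gamma>) has_vector_derivative \<eta>) (at 0)}"

end

theory Submission
  imports Defs
begin

lemma cJ_add: "cJ (a + b) = cJ a + cJ b"
  by (simp add: cJ_def vec_eq_iff algebra_simps)
lemma cJ_scaleR: "cJ (r *\<^sub>R a) = r *\<^sub>R cJ a"
  by (simp add: cJ_def vec_eq_iff scaleR_conv_of_real algebra_simps)
lemma cJ_minus: "cJ (- a) = - cJ a"
  by (simp add: cJ_def vec_eq_iff)
lemma cJ_diff: "cJ (a - b) = cJ a - cJ b"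
  by (simp add: cJ_def vec_eq_iff algebra_simps)
lemma cJ_cJ: "cJ (cJ a) = - a"
  by (simp add: cJ_def vec_eq_iff)
lemma inner_cJ_cJ: "inner (cJ a) (cJ b) = inner a b"
  by (auto simp: cJ_def inner_vec_def inner_complex_def intro!: sum.cong)
lemma inner_cJ_left: "inner (cJ a) b = - inner a (cJ b)"
  by (simp add: cJ_def inner_vec_def inner_complex_def sum_negf[symmetric] algebra_simps)
lemma linear_cJ: "linear cJ"
  by (rule linearI) (simp_all add: cJ_add cJ_scaleR)
lemma bounded_linear_cJ: "bounded_linear cJ"
  using linear_cJ by (simp add: linear_conv_bounded_linear)

lemma omega_self [simp]: "omega a a = 0"
  unfolding omega_def using inner_cJ_left[of a a] by (simp add: inner_commute)
lemma omega_antisym: "omega a b = - omega b a"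
  unfolding omega_def by (metis inner_cJ_left inner_commute)
lemma omega_add_right [simp]: "omega a (b + c) = omega a b + omega a c"
  by (simp add: omega_def inner_add_right)
lemma omega_add_left [simp]: "omega (a + b) c = omega a c + omega b c"
  by (simp add: omega_def inner_add_left cJ_add)
lemma omega_diff_right [simp]: "omega a (b - c) = omega a b - omega a c"
  by (simp add: omega_def inner_diff_right)
lemma omega_diff_left [simp]: "omega (a - b) c = omega a c - omega b c"
  by (simp add: omega_def inner_diff_left cJ_diff)
lemma omega_minus_right [simp]: "omega a (- b) = - omega a b"
  by (simp add: omega_def)
lemma omega_minus_left [simp]: "omega (- a) b = - omega a b"
  by (simp add: omega_def cJ_minus)
lemma omega_scaleR_right [simp]: "omega a (r *\<^sub>R b) = r * omega a b"
  by (simp add: omega_def)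
lemma omega_scaleR_left [simp]: "omega (r *\<^sub>R a) b = r * omega a b"
  by (simp add: omega_def cJ_scaleR)
lemma omega_zero_right [simp]: "omega a 0 = 0"
  by (simp add: omega_def)
lemma omega_zero_left [simp]: "omega 0 a = 0"
  using omega_scaleR_left[of 0 a] by simp

lemma omega_eq_inner: "omega a b = inner a (- cJ b)"
  by (simp add: omega_def inner_cJ_left)

lemma continuous_on_omega [continuous_intros]:
  assumes "continuous_on S f" "continuous_on S g"
  shows "continuous_on S (\<lambda>x. omega (f x) (g x))"
  unfolding omega_def
  by (intro continuous_intros bounded_linear.continuous_on[OF bounded_linear_cJ assms(1)] assms)

lemma tendsto_omega [tendsto_intros]:
  assumes "(f \<longlongrightarrow> a) F" "(g \<longlongrightarrow> b) F"
  shows "((\<lambda>x. omega (f x) (g x)) \<longlongrightarrow> omega a b) F"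
  unfolding omega_def
  by (intro tendsto_intros bounded_linear.tendsto[OF bounded_linear_cJ] assms)

lemma vd_quot:
  fixes f :: "real \<Rightarrow> 'a::real_normed_vector"
  assumes "(f has_vector_derivative d) (at 0)"
  shows "((\<lambda>t. (f t - f 0) /\<^sub>R t) \<longlongrightarrow> d) (at 0)"
proof -
  from assms have "((\<lambda>y. norm ((f y - f 0) - y *\<^sub>R d) / norm (y - 0)) \<longlongrightarrow> 0) (at 0)"
    by (simp add: has_vector_derivative_def has_derivative_iff_norm)
  hence "((\<lambda>y. norm ((f y - f 0) /\<^sub>R y - d)) \<longlongrightarrow> 0) (at 0)"
  proof (rule Lim_transform_eventually)
    have ev: "\<forall>\<^sub>F y in at (0::real). y \<noteq> 0" by (simp add: eventually_at_filter)
    show "\<forall>\<^sub>F y in at 0. norm (f y - f 0 - y *\<^sub>R d) / norm (y - 0) = norm ((f y - f 0) /\<^sub>R y - d)"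
    proof (rule eventually_mono[OF ev])
      fix y :: real assume y: "y \<noteq> 0"
      have "(f y - f 0) /\<^sub>R y - d = (1/y) *\<^sub>R (f y - f 0) - (1/y) *\<^sub>R (y *\<^sub>R d)"
        using y by (simp add: divide_inverse_commute)
      also have "\<dots> = (1/y) *\<^sub>R (f y - f 0 - y *\<^sub>R d)" by (simp only: scaleR_diff_right)
      finally show "norm (f y - f 0 - y *\<^sub>R d) / norm (y - 0) = norm ((f y - f 0) /\<^sub>R y - d)"
        by (simp add: divide_inverse)
    qed
  qed
  thus ?thesis
    using tendsto_norm_zero_iff LIM_zero_cancel by blast
qed


locale spp =
  fixes X :: "(complex ^ 'n) set"
  assumes cb: "convex_body_0 X" and sp: "symp_self_polar X"
begin

lemma compactX: "compact X" and convexX: "convex X" and int0: "0 \<in> interior X"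
  using cb by (auto simp: convex_body_0_def)

lemma closedX: "closed X" using compactX compact_imp_closed by blast

lemma polarX: "symp_polar X = X" using sp by (simp add: symp_self_polar_def)

lemma le1: "a \<in> X \<Longrightarrow> b \<in> X \<Longrightarrow> omega a b \<le> 1"
  using polarX by (metis (no_types, lifting) mem_Collect_eq symp_polar_def)

lemma memI: "(\<And>a. a \<in> X \<Longrightarrow> omega a b \<le> 1) \<Longrightarrow> b \<in> X"
  using polarX unfolding symp_polar_def by blast

lemma negX: "a \<in> X \<Longrightarrow> - a \<in> X"
  by (rule memI) (metis le1 omega_antisym omega_minus_right)

lemma frontier_subX: "frontier X \<subseteq> X"
  using closedX by (simp add: frontier_subset_closed)

lemma aff_dimX: "aff_dim X = int DIM(complex ^ 'n)"
  using int0 interior_rel_interior_gen[of X] by (metis empty_iff)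

lemma rel_interiorX: "rel_interior X = interior X"
  using aff_dimX interior_rel_interior by blast

lemma exists_partner:
  assumes x: "x \<in> frontier X"
  shows "\<exists>y\<in>X. omega x y = 1"
proof -
  have "x \<in> closure X" using x by (simp add: frontier_def)
  moreover have "x \<notin> rel_interior X" using x by (simp add: frontier_def rel_interiorX)
  ultimately obtain a where a0: "a \<noteq> 0" and ha: "\<And>y. y \<in> closure X \<Longrightarrow> a \<bullet> x \<le> a \<bullet> y"
    using supporting_hyperplane_relative_frontier[OF convexX] by blast
  define u where "u = - a"
  have u0: "u \<noteq> 0" using a0 by (simp add: u_def)
  have hu: "z \<bullet> u \<le> x \<bullet> u" if "z \<in> X" for z
    using ha[of z] that closure_subset by (force simp: u_def inner_commute)
  obtain e where e: "e > 0" "ball 0 e \<subseteq> X" using int0 mem_interior by blast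
  define w where "w = (e / 2 / norm u) *\<^sub>R u"
  have "norm w = e / 2" using u0 e by (simp add: w_def)
  hence "w \<in> X" using e by (auto simp: subset_iff)
  moreover have "w \<bullet> u > 0" using u0 e by (simp add: w_def)
  ultimately have xu: "x \<bullet> u > 0" using hu by force
  define y where "y = (1 / (x \<bullet> u)) *\<^sub>R cJ u"
  have om: "omega z y = (z \<bullet> u) / (x \<bullet> u)" for z
    by (simp add: y_def omega_def inner_cJ_cJ)
  have "y \<in> X"
    by (rule memI) (use hu xu in \<open>simp add: om\<close>)
  moreover have "omega x y = 1" using xu by (simp add: om)
  ultimately show ?thesis by blast
qed

lemma normal_parallel:
  assumes x: "x \<in> frontier X" and U: "open U" "x \<in> U"
    and gd: "\<And>y. y \<in> U \<Longrightarrow> (g has_derivative (\<lambda>h. G y \<bullet> h)) (at y)"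
    and G0: "G x \<noteq> 0" and gX: "\<And>y. y \<in> U \<Longrightarrow> y \<in> X \<longleftrightarrow> g y \<le> (0::real)"
    and hu: "\<And>z. z \<in> X \<Longrightarrow> z \<bullet> u \<le> x \<bullet> u"
  shows "u = ((u \<bullet> G x) / (G x \<bullet> G x)) *\<^sub>R G x"
proof -
  have gx: "g x \<le> 0" using x frontier_subX gX U by blast
  have step1: "u \<bullet> h \<le> 0" if h: "G x \<bullet> h < 0" for h
  proof (rule ccontr)
    assume uh: "\<not> u \<bullet> h \<le> 0"
    have d1: "((\<lambda>t. x + t *\<^sub>R h) has_derivative (\<lambda>t. t *\<^sub>R h)) (at (0::real))"
      by (auto intro!: derivative_eq_intros)
    have d2: "(g has_derivative (\<lambda>k. G x \<bullet> k)) (at (x + 0 *\<^sub>R h))"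
      using gd U by simp
    have "((g \<circ> (\<lambda>t. x + t *\<^sub>R h)) has_derivative ((\<lambda>k. G x \<bullet> k) \<circ> (\<lambda>t. t *\<^sub>R h))) (at 0)"
      by (rule diff_chain_at[OF d1 d2])
    moreover have "(\<lambda>k. G x \<bullet> k) \<circ> (\<lambda>t. t *\<^sub>R h) = (\<lambda>t. (G x \<bullet> h) * t)"
      by (auto simp: fun_eq_iff)
    ultimately have "((\<lambda>t. g (x + t *\<^sub>R h)) has_field_derivative (G x \<bullet> h)) (at 0)"
      by (simp add: has_field_derivative_def o_def)
    then obtain d where d: "d > 0" "\<And>t. t > 0 \<Longrightarrow> t < d \<Longrightarrow> g (x + 0 *\<^sub>R h) > g (x + (0 + t) *\<^sub>R h)"
      using DERIV_neg_dec_right[OF _ h] by blast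
    obtain e where e: "e > 0" "ball x e \<subseteq> U" using U open_contains_ball by blast
    define E where "E = e / (norm h + 1)"
    have pos: "norm h + 1 > 0" by (simp add: add_nonneg_pos)
    have E0: "E > 0" unfolding E_def using e pos by simp
    define t where "t = min d E / 2"
    have m1: "min d E \<le> E" and m2: "min d E \<le> d" and m3: "min d E > 0" using E0 d by auto
    have t0: "t > 0" unfolding t_def using m3 by linarith
    have td: "t < d" unfolding t_def using m2 m3 by linarith
    have "t < E" unfolding t_def using m1 m3 by linarith
    hence "t < e / (norm h + 1)" by (simp add: E_def)
    hence "t * (norm h + 1) < e" using pos by (simp add: less_divide_eq)
    hence "t * norm h + t < e" by (simp add: distrib_left)
    hence "norm (t *\<^sub>R h) < e" using t0 by simp
    hence "x + t *\<^sub>R h \<in> U" using e by (auto simp: dist_norm)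
    moreover have "g (x + t *\<^sub>R h) < 0" using d(2)[OF t0 td] gx by simp
    ultimately have "x + t *\<^sub>R h \<in> X" using gX by auto
    hence "(x + t *\<^sub>R h) \<bullet> u \<le> x \<bullet> u" by (rule hu)
    hence "t * (h \<bullet> u) \<le> 0" by (simp add: inner_add_left)
    moreover have "t * (h \<bullet> u) > 0" using t0 uh by (simp add: inner_commute)
    ultimately show False by simp
  qed
  define l where "l = (u \<bullet> G x) / (G x \<bullet> G x)"
  define w where "w = u - l *\<^sub>R G x"
  have GG: "G x \<bullet> G x > 0" using G0 by simp
  have wG: "w \<bullet> G x = 0" using GG by (simp add: w_def l_def inner_diff_left)
  have uw: "u \<bullet> w = w \<bullet> w"
  proof -
    have "u = w + l *\<^sub>R G x" by (simp add: w_def)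
    hence "u \<bullet> w = w \<bullet> w + l * (G x \<bullet> w)" by (metis inner_add_left inner_scaleR_left)
    thus ?thesis using wG by (simp add: inner_commute)
  qed
  have le: "w \<bullet> w \<le> \<epsilon> * (u \<bullet> G x)" if "\<epsilon> > 0" for \<epsilon>
  proof -
    have "G x \<bullet> (w - \<epsilon> *\<^sub>R G x) < 0"
      using wG GG that by (simp add: inner_diff_right inner_commute)
    hence "u \<bullet> (w - \<epsilon> *\<^sub>R G x) \<le> 0" by (rule step1)
    thus ?thesis using uw by (simp add: inner_diff_right)
  qed
  have "w = 0"
  proof (rule ccontr)
    assume "w \<noteq> 0"
    hence ww: "w \<bullet> w > 0" by simp
    define \<epsilon> where "\<epsilon> = (w \<bullet> w) / (2 * (\<bar>u \<bullet> G x\<bar> + 1))"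
    have e0: "\<epsilon> > 0" using ww by (simp add: \<epsilon>_def)
    have "w \<bullet> w \<le> \<epsilon> * (u \<bullet> G x)" by (rule le[OF e0])
    also have "\<dots> \<le> \<epsilon> * (\<bar>u \<bullet> G x\<bar> + 1)" using e0 by (intro mult_left_mono) auto
    also have "\<dots> = (w \<bullet> w) / 2"
    proof -
      have "\<bar>u \<bullet> G x\<bar> + 1 > 0" by (simp add: add_nonneg_pos)
      thus ?thesis unfolding \<epsilon>_def by (simp add: field_simps)
    qed
    finally show False using ww by simp
  qed
  thus ?thesis by (simp add: w_def l_def)
qed


lemma unique_partner:
  assumes C1: "C1_boundary X" and x: "x \<in> frontier X"
    and y1: "y1 \<in> X" "omega x y1 = 1" and y2: "y2 \<in> X" "omega x y2 = 1"
  shows "y1 = y2"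
proof -
  from C1 x obtain U g G where U: "open U" "x \<in> U"
    and gd: "\<forall>y\<in>U. (g has_derivative (\<lambda>h. G y \<bullet> h)) (at y)" and G0: "G x \<noteq> 0"
    and gX: "\<forall>y\<in>U. y \<in> X \<longleftrightarrow> g y \<le> (0::real)"
    using bspec[OF C1[unfolded C1_boundary_def] x] by (elim exE conjE) (rule that; assumption)
  define u1 where "u1 = - cJ y1"
  define u2 where "u2 = - cJ y2"
  have i1: "z \<bullet> u1 = omega z y1" for z by (simp add: u1_def omega_eq_inner)
  have i2: "z \<bullet> u2 = omega z y2" for z by (simp add: u2_def omega_eq_inner)
  define c1 where "c1 = (u1 \<bullet> G x) / (G x \<bullet> G x)"
  define c2 where "c2 = (u2 \<bullet> G x) / (G x \<bullet> G x)"
  have e1: "u1 = c1 *\<^sub>R G x" unfolding c1_def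
    by (rule normal_parallel[where G=G and g=g and U=U and x=x, OF x U _ G0]) (use gd gX le1 y1 in \<open>auto simp: i1\<close>)
  have e2: "u2 = c2 *\<^sub>R G x" unfolding c2_def
    by (rule normal_parallel[where G=G and g=g and U=U and x=x, OF x U _ G0]) (use gd gX le1 y2 in \<open>auto simp: i2\<close>)
  have "x \<bullet> u1 = 1" "x \<bullet> u2 = 1" using y1 y2 by (simp_all add: i1 i2)
  hence "c1 * (x \<bullet> G x) = 1" "c2 * (x \<bullet> G x) = 1"
    by (simp_all only: e1 e2 inner_scaleR_right)
  hence "c1 = c2"
    by (metis mult_cancel_right mult_zero_left zero_neq_one)
  hence "u1 = u2" by (simp only: e1 e2)
  hence "cJ (cJ y1) = cJ (cJ y2)" by (simp add: u1_def u2_def)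
  thus ?thesis by (simp add: cJ_cJ)
qed

lemma sp_f:
  assumes C1: "C1_boundary X" and x: "x \<in> frontier X"
  shows "sp_f X x \<in> X \<and> omega x (sp_f X x) = 1"
proof -
  have "\<exists>!y. y \<in> X \<and> omega x y = 1"
    using exists_partner[OF x] unique_partner[OF C1 x] by blast
  thus ?thesis unfolding sp_f_def polarX by (rule theI')
qed

lemma sp_f_eq:
  assumes C1: "C1_boundary X" and x: "x \<in> frontier X" and "y \<in> X" "omega x y = 1"
  shows "sp_f X x = y"
  using sp_f[OF C1 x] unique_partner[OF C1 x] assms by blast

lemma sp_f_cont:
  assumes C1: "C1_boundary X"
  shows "continuous_on (frontier X) (sp_f X)"
proof (rule continuous_from_closed_graph[OF compactX])
  show "sp_f X \<in> frontier X \<rightarrow> X" using sp_f[OF C1] by blast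
  have eq: "(\<lambda>x. (x, sp_f X x)) ` frontier X = (frontier X \<times> X) \<inter> {p. omega (fst p) (snd p) = 1}"
  proof (intro equalityI subsetI)
    fix p assume "p \<in> (\<lambda>x. (x, sp_f X x)) ` frontier X"
    then obtain a where "a \<in> frontier X" "p = (a, sp_f X a)" by blast
    thus "p \<in> (frontier X \<times> X) \<inter> {p. omega (fst p) (snd p) = 1}" using sp_f[OF C1] by auto
  next
    fix p assume p: "p \<in> (frontier X \<times> X) \<inter> {p. omega (fst p) (snd p) = 1}"
    obtain a b where ab: "p = (a, b)" by fastforce
    have "a \<in> frontier X" "b \<in> X" "omega a b = 1" using p ab by auto
    hence "sp_f X a = b" using sp_f_eq[OF C1] by blast
    thus "p \<in> (\<lambda>x. (x, sp_f X x)) ` frontier X" using ab \<open>a \<in> frontier X\<close> by force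
  qed
  have "closed {p. omega (fst p) (snd p) = (1::real)}"
    by (rule closed_Collect_eq) (intro continuous_intros)+
  thus "closed ((\<lambda>x. (x, sp_f X x)) ` frontier X)"
    unfolding eq by (intro closed_Int closed_Times closedX frontier_closed)
qed

lemma ray:
  assumes "x \<in> X" "y \<in> X" "x' \<in> X" "y' \<in> X" "omega x y = 1" "omega x' y' = 1"
    and eq: "x' + y' = s *\<^sub>R (x + y)" and s: "s > 0"
  shows "s = 1 \<and> omega x x' = 0"
proof -
  define c where "c = omega x x'"
  have y': "y' = s *\<^sub>R (x + y) - x'" using eq by (simp add: algebra_simps)
  have "omega x y' \<le> 1" using assms le1 by blast
  hence A: "s - c \<le> 1" using assms(5) by (simp add: y' c_def)
  have sy: "s *\<^sub>R y = x' + y' - s *\<^sub>R x" using eq by (simp add: algebra_simps)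
  have "omega x' (s *\<^sub>R y) \<le> s" using le1[OF assms(3) assms(2)] s by simp
  hence B: "1 + s * c \<le> s" using assms(6) unfolding sy
    by (simp add: c_def omega_antisym[of x' x])
  have "s * (s - 1) \<le> s * c" using A s by (intro mult_left_mono) auto
  hence "(s - 1)^2 \<le> 0" using B by (simp add: power2_eq_square algebra_simps)
  hence s1: "s = 1" by simp
  thus ?thesis using A B by (simp add: c_def)
qed


lemma fermat0:
  fixes \<phi> :: "real \<Rightarrow> real"
  assumes "(\<phi> has_vector_derivative l) (at 0)" and "\<And>t. \<phi> t \<le> \<phi> 0"
  shows "l = 0"
proof -
  have "(\<phi> has_real_derivative l) (at 0)"
    using assms(1) by (simp add: has_real_derivative_iff_has_vector_derivative)
  thus ?thesis using DERIV_local_max[OF _ zero_less_one] assms(2) by blast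
qed

lemma transversal:
  assumes C1: "C1_boundary X" and x: "x \<in> frontier X"
  shows "x + sp_f X x \<notin> tangent_Y X x"
proof
  assume "x + sp_f X x \<in> tangent_Y X x"
  then obtain \<xi> \<eta> \<gamma> where eq: "x + sp_f X x = \<xi> + \<eta>" and \<gamma>: "\<And>t. \<gamma> t \<in> frontier X"
    and \<gamma>0: "\<gamma> 0 = x" and d\<gamma>: "(\<gamma> has_vector_derivative \<xi>) (at 0)"
    and dz: "((sp_f X \<circ> \<gamma>) has_vector_derivative \<eta>) (at 0)"
    unfolding tangent_Y_def by blast
  define y where "y = sp_f X x"
  define z where "z = sp_f X \<circ> \<gamma>"
  have yX: "y \<in> X" and xy: "omega x y = 1" using sp_f[OF C1 x] by (auto simp: y_def)
  have xX: "x \<in> X" using x frontier_subX by blast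
  have \<gamma>X: "\<gamma> t \<in> X" for t using \<gamma> frontier_subX by blast
  have zX: "z t \<in> X" and z1: "omega (\<gamma> t) (z t) = 1" for t
    using sp_f[OF C1 \<gamma>[of t]] by (auto simp: z_def)
  have z0: "z 0 = y" by (simp add: z_def y_def \<gamma>0)
  have dz': "(z has_vector_derivative \<eta>) (at 0)" using dz by (simp add: z_def)
  have a: "omega \<xi> y = 0"
  proof -
    have "((\<lambda>t. inner (\<gamma> t) (- cJ y)) has_vector_derivative inner \<xi> (- cJ y)) (at 0)"
      by (rule bounded_linear.has_vector_derivative[OF bounded_linear_inner_left d\<gamma>])
    moreover have "inner (\<gamma> t) (- cJ y) \<le> inner (\<gamma> 0) (- cJ y)" for t
    proof -
      have "omega (\<gamma> t) y \<le> omega (\<gamma> 0) y" using le1[OF \<gamma>X yX, of t] xy \<gamma>0 by simp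
      thus ?thesis by (simp only: omega_eq_inner)
    qed
    ultimately have "inner \<xi> (- cJ y) = 0" by (rule fermat0)
    thus ?thesis by (simp add: omega_eq_inner)
  qed
  have b: "omega x \<eta> = 0"
  proof -
    have "((\<lambda>t. inner (cJ x) (z t)) has_vector_derivative inner (cJ x) \<eta>) (at 0)"
      by (rule bounded_linear.has_vector_derivative[OF bounded_linear_inner_right dz'])
    moreover have "inner (cJ x) (z t) \<le> inner (cJ x) (z 0)" for t
      using le1[OF xX zX, of t] xy z0 by (simp add: omega_def)
    ultimately have "inner (cJ x) \<eta> = 0" by (rule fermat0)
    thus ?thesis by (simp add: omega_def)
  qed
  have c: "omega \<xi> \<eta> \<ge> 0"
  proof -
    have q1: "((\<lambda>t. (\<gamma> t - \<gamma> 0) /\<^sub>R t) \<longlongrightarrow> \<xi>) (at 0)" by (rule vd_quot[OF d\<gamma>])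
    have q2: "((\<lambda>t. (z t - z 0) /\<^sub>R t) \<longlongrightarrow> \<eta>) (at 0)" by (rule vd_quot[OF dz'])
    have lim: "((\<lambda>t. omega ((\<gamma> t - \<gamma> 0) /\<^sub>R t) ((z t - z 0) /\<^sub>R t)) \<longlongrightarrow> omega \<xi> \<eta>) (at 0)"
      by (rule tendsto_omega[OF q1 q2])
    have nn: "0 \<le> omega ((\<gamma> t - \<gamma> 0) /\<^sub>R t) ((z t - z 0) /\<^sub>R t)" for t
    proof -
      have "omega (\<gamma> t - x) (z t - y) = 1 - omega (\<gamma> t) y - omega x (z t) + 1"
        using z1[of t] xy by simp
      moreover have "omega (\<gamma> t) y \<le> 1" "omega x (z t) \<le> 1" using le1 \<gamma>X yX xX zX by auto
      ultimately have A: "omega (\<gamma> t - x) (z t - y) \<ge> 0" by linarith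
      have eqn: "omega ((\<gamma> t - \<gamma> 0) /\<^sub>R t) ((z t - z 0) /\<^sub>R t) = (inverse t * inverse t) * omega (\<gamma> t - x) (z t - y)"
      proof -
        have gen: "omega (a /\<^sub>R t) (b /\<^sub>R t) = (inverse t * inverse t) * omega a b" for a b
          by (simp only: omega_scaleR_left omega_scaleR_right mult.assoc)
        show ?thesis by (simp only: gen \<gamma>0 z0)
      qed
      show ?thesis unfolding eqn by (rule mult_nonneg_nonneg[OF _ A]) simp
    qed
    show ?thesis
      by (rule tendsto_lowerbound[OF lim]) (use nn in auto)
  qed
  have \<eta>eq: "\<eta> = x + y - \<xi>" using eq by (simp add: y_def algebra_simps)
  have "omega x \<xi> = 1" using b xy by (simp add: \<eta>eq)
  moreover have "omega \<xi> \<eta> = - omega x \<xi>" using a by (simp add: \<eta>eq omega_antisym[of \<xi> x])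
  ultimately show False using c by simp
qed


lemma P_nonzero:
  assumes C1: "C1_boundary X" and x: "x \<in> frontier X"
  shows "x + sp_f X x \<noteq> 0"
proof
  assume "x + sp_f X x = 0"
  hence "sp_f X x = - x" by (simp add: eq_neg_iff_add_eq_0 add.commute)
  thus False using sp_f[OF C1 x] by simp
qed

lemma exists_on_ray:
  assumes C1: "C1_boundary X" and v: "v \<noteq> 0"
  shows "\<exists>x\<in>frontier X. \<exists>t\<ge>0. x + sp_f X x = t *\<^sub>R v"
proof (rule ccontr)
  assume no: "\<not> ?thesis"
  define P where "P x = x + sp_f X x" for x
  define \<Psi> where "\<Psi> x = (1 / norm (P x)) *\<^sub>R P x" for x
  define u where "u = (1 / norm v) *\<^sub>R v"
  have P0: "x \<in> frontier X \<Longrightarrow> P x \<noteq> 0" for x using P_nonzero[OF C1] by (simp add: P_def)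
  have u1: "u \<in> sphere 0 1" using v by (simp add: u_def)
  have \<Psi>im: "\<Psi> ` frontier X \<subseteq> sphere 0 1 - {u}"
  proof
    fix p assume "p \<in> \<Psi> ` frontier X"
    then obtain x where x: "x \<in> frontier X" "p = \<Psi> x" by blast
    have "norm p = 1" using P0[OF x(1)] by (simp add: x(2) \<Psi>_def)
    moreover have "p \<noteq> u"
    proof
      assume "p = u"
      hence "(1 / norm (P x)) *\<^sub>R P x = (1 / norm v) *\<^sub>R v" by (simp add: x(2) \<Psi>_def u_def)
      hence "norm (P x) *\<^sub>R ((1 / norm (P x)) *\<^sub>R P x) = norm (P x) *\<^sub>R ((1 / norm v) *\<^sub>R v)"
        by simp
      hence "P x = (norm (P x) / norm v) *\<^sub>R v" using P0[OF x(1)]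
        by (simp add: divide_inverse ac_simps)
      moreover have "norm (P x) / norm v \<ge> 0" by simp
      ultimately show False using no x(1) by (auto simp: P_def)
    qed
    ultimately show "p \<in> sphere 0 1 - {u}" by simp
  qed
  have \<Psi>inj: "inj_on \<Psi> (frontier X)"
  proof
    fix x x' assume x: "x \<in> frontier X" and x': "x' \<in> frontier X" and e: "\<Psi> x = \<Psi> x'"
    define s where "s = norm (P x') / norm (P x)"
    have s0: "s > 0" using P0 x x' by (simp add: s_def)
    have "P x' = s *\<^sub>R P x"
    proof -
      have "P x' = norm (P x') *\<^sub>R \<Psi> x'" using P0[OF x'] by (simp add: \<Psi>_def)
      also have "\<dots> = norm (P x') *\<^sub>R \<Psi> x" by (simp add: e)
      also have "\<dots> = s *\<^sub>R P x" by (simp add: \<Psi>_def s_def)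
      finally show ?thesis .
    qed
    hence "s = 1 \<and> omega x x' = 0"
      using ray[of x "sp_f X x" x' "sp_f X x'" s] sp_f[OF C1 x] sp_f[OF C1 x'] x x' frontier_subX s0
      by (auto simp: P_def)
    hence s1: "s = 1" and o0: "omega x x' = 0" by auto
    have PP: "x' + sp_f X x' = x + sp_f X x" using \<open>P x' = s *\<^sub>R P x\<close> s1 by (simp add: P_def)
    define y' where "y' = sp_f X x'"
    have y'eq: "y' = x + sp_f X x - x'" using PP by (simp add: y'_def algebra_simps)
    have "omega x y' = 1" using o0 sp_f[OF C1 x] by (simp add: y'eq)
    moreover have "y' \<in> X" using sp_f[OF C1 x'] by (simp add: y'_def)
    ultimately have "sp_f X x = y'" using sp_f_eq[OF C1 x] by blast
    thus "x = x'" using PP by (simp add: y'_def)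
  qed
  have \<Psi>cont: "continuous_on (frontier X) \<Psi>"
    unfolding \<Psi>_def P_def
    by (intro continuous_intros sp_f_cont[OF C1]) (use P0 in \<open>auto simp: P_def\<close>)
  obtain c :: "complex ^ 'n" where c: "c \<in> Basis" using nonempty_Basis by blast
  hence c0: "c \<noteq> 0" by auto
  define T where "T = {x::complex ^ 'n. c \<bullet> x = 0}"
  have affT: "affine T" unfolding T_def by (rule affine_hyperplane)
  have adT: "aff_dim T = int DIM(complex ^ 'n) - 1" unfolding T_def using c0 by simp
  have DIM2: "DIM(complex ^ 'n) \<ge> 2" by simp
  have "(sphere 0 1 - {u}) homeomorphic T"
    by (rule homeomorphic_punctured_sphere_affine[OF zero_less_one u1 affT]) (simp add: adT)
  then obtain g h where hom: "homeomorphism (sphere 0 1 - {u}) T g h"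
    by (auto simp: homeomorphic_def)
  define F where "F = g \<circ> \<Psi>"
  have gcont: "continuous_on (sphere 0 1 - {u}) g" and gim: "g ` (sphere 0 1 - {u}) = T"
    and hg: "\<And>p. p \<in> sphere 0 1 - {u} \<Longrightarrow> h (g p) = p"
    using hom by (auto simp: homeomorphism_def)
  have Fcont: "continuous_on (frontier X) F"
    unfolding F_def by (rule continuous_on_compose[OF \<Psi>cont continuous_on_subset[OF gcont \<Psi>im]])
  have Finj: "inj_on F (frontier X)"
  proof
    fix a b assume a: "a \<in> frontier X" and b: "b \<in> frontier X" and "F a = F b"
    hence "h (g (\<Psi> a)) = h (g (\<Psi> b))" by (simp add: F_def)
    moreover have "\<Psi> a \<in> sphere 0 1 - {u}" "\<Psi> b \<in> sphere 0 1 - {u}" using \<Psi>im a b by auto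
    ultimately have "\<Psi> a = \<Psi> b" using hg by metis
    thus "a = b" using \<Psi>inj a b by (simp add: inj_on_def)
  qed
  have Fim: "F \<in> frontier X \<rightarrow> T"
  proof
    fix x assume "x \<in> frontier X"
    hence "\<Psi> x \<in> sphere 0 1 - {u}" using \<Psi>im by blast
    hence "g (\<Psi> x) \<in> g ` (sphere 0 1 - {u})" by (rule imageI)
    thus "F x \<in> T" using gim by (simp add: F_def)
  qed
  have rfX: "rel_frontier X = frontier X"
    using int0 rel_frontier_nonempty_interior by blast
  have boundedX: "bounded X" using compactX compact_imp_bounded by blast
  have ope: "openin (top_of_set T) (F ` frontier X)"
  proof (rule invariance_of_domain_sphere_affine_set_gen[OF Fcont Finj Fim boundedX convexX affT])
    show "aff_dim T < aff_dim X" using adT aff_dimX by simp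
    show "openin (top_of_set (rel_frontier X)) (frontier X)" by (simp add: rfX)
  qed
  have cpt: "compact (F ` frontier X)"
    by (rule compact_continuous_image[OF Fcont compact_frontier[OF compactX]])
  have clo: "closedin (top_of_set T) (F ` frontier X)"
    using cpt Fim by (intro closed_subset compact_imp_closed) auto
  have "frontier X \<noteq> {}"
  proof -
    have "X \<noteq> {}" using int0 interior_subset by blast
    moreover have "X \<noteq> UNIV" using boundedX not_bounded_UNIV by blast
    ultimately show ?thesis by (simp add: frontier_eq_empty)
  qed
  hence "F ` frontier X \<noteq> {}" by simp
  moreover have "connected T" unfolding T_def by (rule convex_connected[OF convex_hyperplane])
  ultimately have "F ` frontier X = T" using ope clo unfolding connected_clopen by blast
  hence "bounded T" using cpt compact_imp_bounded by metis
  hence "T = {} \<or> (\<exists>a. T = {a})" using affT affine_bounded_eq_trivial by blast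
  hence "aff_dim T \<le> 0" by auto
  moreover have "CARD('n) > 0" by simp
  ultimately show False using adT by simp
qed

end

theorem theorem4p2:
  fixes X :: "(complex ^ 'n) set"
  assumes "convex_body_0 X" and "symp_self_polar X" and "C1_boundary X"
  shows "(\<forall>v. v \<noteq> 0 \<longrightarrow> (\<exists>!p. p \<in> Yset X \<and> (\<exists>t\<ge>0. p = t *\<^sub>R v)))
       \<and> (C2_boundary X \<longrightarrow> (\<forall>x\<in>frontier X. x + sp_f X x \<notin> tangent_Y X x))"
proof -
  interpret spp X using assms(1,2) by unfold_locales
  have part1: "\<forall>v. v \<noteq> 0 \<longrightarrow> (\<exists>!p. p \<in> Yset X \<and> (\<exists>t\<ge>0. p = t *\<^sub>R v))"
  proof (intro allI impI)
    fix v :: "complex ^ 'n" assume v: "v \<noteq> 0"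
    from exists_on_ray[OF assms(3) v] obtain x t where
      x: "x \<in> frontier X" and t: "t \<ge> 0" and xt: "x + sp_f X x = t *\<^sub>R v" by blast
    have tpos: "t > 0"
    proof (rule ccontr)
      assume "\<not> t > 0" hence "t = 0" using t by simp
      thus False using xt P_nonzero[OF assms(3) x] by simp
    qed
    show "\<exists>!p. p \<in> Yset X \<and> (\<exists>t\<ge>0. p = t *\<^sub>R v)"
    proof (rule ex1I[of _ "x + sp_f X x"])
      show "x + sp_f X x \<in> Yset X \<and> (\<exists>t\<ge>0. x + sp_f X x = t *\<^sub>R v)"
        using x t xt unfolding Yset_def by blast
    next
      fix p assume p: "p \<in> Yset X \<and> (\<exists>t\<ge>0. p = t *\<^sub>R v)"
      from p obtain x' where x': "x' \<in> frontier X" and px: "p = x' + sp_f X x'"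
        unfolding Yset_def by blast
      from p obtain t' where t': "t' \<ge> 0" and pt: "p = t' *\<^sub>R v" by blast
      have t'pos: "t' > 0"
      proof (rule ccontr)
        assume "\<not> t' > 0" hence "t' = 0" using t' by simp
        thus False using px pt P_nonzero[OF assms(3) x'] by simp
      qed
      have "x' + sp_f X x' = (t' / t) *\<^sub>R (x + sp_f X x)"
        using xt px pt tpos by simp
      moreover have "t' / t > 0" using tpos t'pos by simp
      ultimately have "t' / t = 1"
        using ray[of x "sp_f X x" x' "sp_f X x'" "t' / t"] sp_f[OF assms(3) x] sp_f[OF assms(3) x']
          x x' frontier_subX by blast
      hence "t' = t" using tpos by simp
      thus "p = x + sp_f X x" using pt xt by simp
    qed
  qed
  have part2: "C2_boundary X \<longrightarrow> (\<forall>x\<in>frontier X. x + sp_f X x \<notin> tangent_Y X x)"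
    using transversal[OF assms(3)] by blast
  show ?thesis using part1 part2 by blast
qed

end
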